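(* Let $n\ge 1$, $\mathcal{I}=\{1,\dots,n\}$, $S>0$, and $C_i>0$, $D_i>0$ for $i\in\mathcal{I}$. Put $D=\sum_{i\in\mathcal{I}}D_i$, $\tilde D_i=\min\{C_i,D_i\}$, $\tilde\beta_i=\tilde D_i/D_i$. For $\theta\ge 0$ consider the linear program $P(\theta)$: $$\max\ \sum_{i\in\mathcal{I}}\big[\beta_i-\theta(\beta-\beta_i)\big]$$ over $(\beta_1,\dots,\beta_n,\beta)\in\mathbb{R}^{n+1}$ subject to $\sum_{i\in\mathcal{I}}\beta_iD_i\le S$; $0\le\beta_i\le\tilde\beta_i$ and $\beta_i\le\beta$ for all $i$; $0\le \beta\le 1$. Let $\beta^{EQ}=\max\{b\ge 0:\ (b,\dots,b,b)\text{ is feasible for }P(\theta)\}=\max\{b\ge0: b\le\tilde\beta_i\ \forall i,\ bD\le S,\ b\le 1\}$ (the perfectly equitable fill-rate), and assume the problem is non-utopian, i.e. $\beta^{EQ}D<S$. Let $m^U=|\{i\in\mathcal{I}:\beta^{EQ}<\tilde\beta_i\}|$ be the number of unbinding variables of the equitable solution, and set $$\theta^U=\frac{m^U}{n-m^U}.$$ Then $\theta^U$ is the tightest upper bound of $\theta$ in the following sense: (a) for every $\theta\ge\theta^U$, the solution $\beta_1=\dots=\beta_n=\beta=\beta^{EQ}$ is optimal for $P(\theta)$; (b) for every $\theta$ with $0\le\theta<\theta^U$, there exists a feasible solution $(\beta_1,\dots,\beta_n,\beta)$ of $P(\theta)$ with $n\beta^{EQ}<\sum_{i\in\mathcal{I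}}\beta_i-\theta\sum_{i\in\mathcal{I}}(\beta-\beta_i)$.
   Context: This models a food-bank allocating supply $S$ (pounds of food) among $n$ agencies; agency $i$ has capacity $C_i$ and demand $D_i$, $\beta_i$ is its fill-rate (allocation divided by demand), $\beta$ is (an upper bound on) the maximum fill-rate, and $\theta\ge0$ is a penalty on deviations from the maximum fill-rate. $\tilde D_i$ is the effective demand and $\tilde\beta_i$ the maximum possible fill-rate of agency $i$. A variable $\beta_i$ is called binding if $\beta_i=\tilde\beta_i$. The objective value of the equal-fill-rate solution at level $\beta^{EQ}$ is $n\beta^{EQ}$. *)

theory Defs
  imports Complex_Main
begin

definition eff_demand :: "(nat \<Rightarrow> real) \<Rightarrow> (nat \<Rightarrow> real) \<Rightarrow> nat \<Rightarrow> real" where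
  "eff_demand C D i = min (C i) (D i)"

definition max_fill :: "(nat \<Rightarrow> real) \<Rightarrow> (nat \<Rightarrow> real) \<Rightarrow> nat \<Rightarrow> real" where
  "max_fill C D i = eff_demand C D i / D i"

definition feasible :: "nat \<Rightarrow> real \<Rightarrow> (nat \<Rightarrow> real) \<Rightarrow> (nat \<Rightarrow> real)
    \<Rightarrow> (nat \<Rightarrow> real) \<Rightarrow> real \<Rightarrow> bool" where
  "feasible n S C D bs b \<longleftrightarrow>
     (\<Sum>i\<in>{1..n}. bs i * D i) \<le> S \<and>
     (\<forall>i\<in>{1..n}. 0 \<le> bs i \<and> bs i \<le> max_fill C D i \<and> bs i \<le> b) \<and>
     0 \<le> b \<and> b \<le> 1"

definition objective :: "nat \<Rightarrow> real \<Rightarrow> (nat \<Rightarrow> real) \<Rightarrow> real \<Rightarrow> real" where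
  "objective n \<theta> bs b = (\<Sum>i\<in>{1..n}. bs i - \<theta> * (b - bs i))"

definition optimal :: "nat \<Rightarrow> real \<Rightarrow> (nat \<Rightarrow> real) \<Rightarrow> (nat \<Rightarrow> real) \<Rightarrow> real
    \<Rightarrow> (nat \<Rightarrow> real) \<Rightarrow> real \<Rightarrow> bool" where
  "optimal n S C D \<theta> bs b \<longleftrightarrow> feasible n S C D bs b \<and>
     (\<forall>bs' b'. feasible n S C D bs' b' \<longrightarrow> objective n \<theta> bs' b' \<le> objective n \<theta> bs b)"

definition beta_EQ :: "nat \<Rightarrow> real \<Rightarrow> (nat \<Rightarrow> real) \<Rightarrow> (nat \<Rightarrow> real) \<Rightarrow> real" where
  "beta_EQ n S C D = (GREATEST b. b \<ge> 0 \<and> feasible n S C D (\<lambda>_. b) b)"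

definition m_U :: "nat \<Rightarrow> real \<Rightarrow> (nat \<Rightarrow> real) \<Rightarrow> (nat \<Rightarrow> real) \<Rightarrow> nat" where
  "m_U n S C D = card {i\<in>{1..n}. beta_EQ n S C D < max_fill C D i}"

definition theta_U :: "nat \<Rightarrow> real \<Rightarrow> (nat \<Rightarrow> real) \<Rightarrow> (nat \<Rightarrow> real) \<Rightarrow> real" where
  "theta_U n S C D = real (m_U n S C D) / (real n - real (m_U n S C D))"

end

theory Submission
  imports Defs
begin

lemma feasible_const:
  "feasible n S C D (\<lambda>_. b) b \<longleftrightarrow> b * (\<Sum>i\<in>{1..n}. D i) \<le> S \<and>
     (\<forall>i\<in>{1..n}. 0 \<le> b \<and> b \<le> max_fill C D i) \<and> 0 \<le> b \<and> b \<le> 1"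
  by (simp add: feasible_def sum_distrib_left)

theorem theorem1:
  fixes n :: nat and S :: real and C D :: "nat \<Rightarrow> real"
  assumes "n \<ge> 1" and "S > 0"
    and "\<And>i. i \<in> {1..n} \<Longrightarrow> C i > 0"
    and "\<And>i. i \<in> {1..n} \<Longrightarrow> D i > 0"
    and nonutopian: "beta_EQ n S C D * (\<Sum>i\<in>{1..n}. D i) < S"
  shows "(\<forall>\<theta>. \<theta> \<ge> theta_U n S C D \<longrightarrow>
            optimal n S C D \<theta> (\<lambda>_. beta_EQ n S C D) (beta_EQ n S C D))
       \<and> (\<forall>\<theta>. 0 \<le> \<theta> \<and> \<theta> < theta_U n S C D \<longrightarrow>
            (\<exists>bs b. feasible n S C D bs b \<and>
               real n * beta_EQ n S C D <
                 (\<Sum>i\<in>{1..n}. bs i) - \<theta> * (\<Sum>i\<in>{1..n}. b - bs i)))"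
proof -
  let ?A = "{1..n}"
  let ?mf = "max_fill C D"
  define Ds where "Ds = (\<Sum>i\<in>?A. D i)"
  define \<mu> where "\<mu> = Min (?mf ` ?A)"
  define g where "g = min \<mu> (min (S / Ds) 1)"
  define \<beta> where "\<beta> = beta_EQ n S C D"
  have Ane: "?A \<noteq> {}" using assms(1) by auto
  have Ds_pos: "Ds > 0" unfolding Ds_def
    using Ane assms(4) by (intro sum_pos) auto
  have mf_pos: "?mf i > 0" if "i \<in> ?A" for i
    using assms(3,4)[OF that] by (simp add: max_fill_def eff_demand_def)
  have mf_le1: "?mf i \<le> 1" if "i \<in> ?A" for i
    using assms(4)[OF that] by (simp add: max_fill_def eff_demand_def)
  have mu_le: "\<mu> \<le> ?mf i" if "i \<in> ?A" for i
    unfolding \<mu>_def using that by (intro Min_le) auto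
  have mu_in: "\<mu> \<in> ?mf ` ?A" unfolding \<mu>_def using Ane by (intro Min_in) auto
  then obtain i0 where i0: "i0 \<in> ?A" "?mf i0 = \<mu>" by auto
  have mu_pos: "\<mu> > 0" using mf_pos i0 by auto
  have mu_le1: "\<mu> \<le> 1" using mf_le1 i0 by auto
  have Pg: "g \<ge> 0 \<and> feasible n S C D (\<lambda>_. g) g"
  proof -
    have "g * Ds \<le> S" using Ds_pos unfolding g_def
      by (metis min.cobounded1 min.coboundedI2 pos_le_divide_eq)
    moreover have "0 \<le> g" unfolding g_def using mu_pos Ds_pos assms(2) by auto
    moreover have "g \<le> 1" unfolding g_def by auto
    moreover have "\<forall>i\<in>?A. g \<le> ?mf i" using mu_le unfolding g_def by fastforce
    ultimately show ?thesis unfolding feasible_const Ds_def by auto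
  qed
  have gmax: "b \<le> g" if "b \<ge> 0 \<and> feasible n S C D (\<lambda>_. b) b" for b
  proof -
    from that have h: "b * Ds \<le> S" "\<forall>i\<in>?A. b \<le> ?mf i" "b \<le> 1"
      unfolding feasible_const Ds_def by auto
    have "b \<le> \<mu>" unfolding \<mu>_def using h(2) Ane by (intro Min.boundedI) auto
    moreover have "b \<le> S / Ds" using h(1) Ds_pos by (simp add: pos_le_divide_eq)
    ultimately show ?thesis using h(3) unfolding g_def by auto
  qed
  have bg: "\<beta> = g" unfolding \<beta>_def beta_EQ_def
    by (rule Greatest_equality) (use Pg gmax in auto)
  have "g < S / Ds" using nonutopian Ds_pos unfolding \<beta>_def[symmetric] bg Ds_def[symmetric]
    by (simp add: pos_less_divide_eq)
  hence bmu: "\<beta> = \<mu>" using mu_le1 unfolding bg g_def by (auto simp: min_def split: if_splits)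
  have bpos: "\<beta> > 0" using bmu mu_pos by simp
  have bD: "\<beta> * Ds < S" using nonutopian unfolding \<beta>_def Ds_def .
  define U where "U = {i\<in>?A. \<beta> < ?mf i}"
  define m where "m = card U"
  have mU: "m_U n S C D = m" unfolding m_U_def m_def U_def \<beta>_def ..
  have UA: "U \<subseteq> ?A" unfolding U_def by auto
  have finU: "finite U" using UA finite_subset by blast
  have i0U: "i0 \<notin> U" unfolding U_def using i0 bmu by auto
  have cardAU: "card (?A - U) = n - m" unfolding m_def using UA finU by (simp add: card_Diff_subset)
  have mlt: "m < n" unfolding m_def
    using psubset_card_mono[of ?A U] UA i0U i0 by fastforce
  have rnm: "real (n - m) = real n - real m" using mlt by simp
  have nm_pos: "real n - real m > 0" using mlt by simp
  have tU: "theta_U n S C D = real m / (real n - real m)" unfolding theta_U_def mU ..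
  have sumIf: "(\<Sum>i\<in>?A. if i \<in> U then x else y) = real m * x + (real n - real m) * y" for x y :: real
  proof -
    have "(\<Sum>i\<in>?A. if i \<in> U then x else y) = (\<Sum>i\<in>?A \<inter> {i. i\<in>U}. x) + (\<Sum>i\<in>?A \<inter> - {i. i\<in>U}. y)"
      by (rule sum.If_cases) simp
    also have "?A \<inter> {i. i\<in>U} = U" using UA by auto
    also have "?A \<inter> - {i. i\<in>U} = ?A - U" by auto
    finally show ?thesis using cardAU rnm unfolding m_def by simp
  qed
  have bfeas: "feasible n S C D (\<lambda>_. \<beta>) \<beta>" using Pg bg by simp
  have ble: "\<beta> \<le> ?mf i" if "i \<in> ?A" for i using bmu mu_le that by simp
  show ?thesis unfolding \<beta>_def[symmetric]
  proof (intro conjI allI impI)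
    fix \<theta> assume th: "theta_U n S C D \<le> \<theta>"
    have thmm: "\<theta> * (real n - real m) \<ge> real m" using th nm_pos unfolding tU
      by (simp add: pos_divide_le_eq)
    have th0: "\<theta> \<ge> 0" proof -
      have "theta_U n S C D \<ge> 0" unfolding tU using nm_pos by simp
      thus ?thesis using th by linarith
    qed
    show "optimal n S C D \<theta> (\<lambda>_. \<beta>) \<beta>" unfolding optimal_def
    proof (intro conjI allI impI)
      show "feasible n S C D (\<lambda>_. \<beta>) \<beta>" by (rule bfeas)
      fix bs b assume f: "feasible n S C D bs b"
      hence f1: "\<forall>i\<in>?A. 0 \<le> bs i \<and> bs i \<le> ?mf i \<and> bs i \<le> b" unfolding feasible_def by auto
      have rhs: "objective n \<theta> (\<lambda>_. \<beta>) \<beta> = real n * \<beta>" unfolding objective_def by simp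
      show "objective n \<theta> bs b \<le> objective n \<theta> (\<lambda>_. \<beta>) \<beta>"
      proof (cases "b \<le> \<beta>")
        case True
        have "objective n \<theta> bs b \<le> (\<Sum>i\<in>?A. \<beta>)" unfolding objective_def
        proof (rule sum_mono)
          fix i assume "i \<in> ?A"
          with f1 have "bs i \<le> b" by auto
          moreover have "\<theta> * (b - bs i) \<ge> 0" using th0 calculation by simp
          ultimately show "bs i - \<theta> * (b - bs i) \<le> \<beta>" using True by linarith
        qed
        thus ?thesis using rhs by simp
      next
        case False
        have "objective n \<theta> bs b \<le> (\<Sum>i\<in>?A. if i \<in> U then b else (1+\<theta>)*\<beta> - \<theta> * b)"
          unfolding objective_def
        proof (rule sum_mono)
          fix i assume iA: "i \<in> ?A"
          with f1 have h: "bs i \<le> b" "bs i \<le> ?mf i" by auto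
          show "bs i - \<theta> * (b - bs i) \<le> (if i \<in> U then b else (1+\<theta>)*\<beta> - \<theta> * b)"
          proof (cases "i \<in> U")
            case True
            have "\<theta> * (b - bs i) \<ge> 0" using th0 h by simp
            thus ?thesis using True h by simp
          next
            case False
            hence "bs i \<le> \<beta>" using h iA unfolding U_def by auto
            hence "(1+\<theta>) * bs i \<le> (1+\<theta>) * \<beta>" using th0 by (intro mult_left_mono) auto
            thus ?thesis using False by (simp add: algebra_simps)
          qed
        qed
        also have "\<dots> = real m * b + (real n - real m) * ((1+\<theta>)*\<beta> - \<theta> * b)" by (rule sumIf)
        also have "\<dots> \<le> real n * \<beta>"
        proof -
          have "(b - \<beta>) * (\<theta> * (real n - real m) - real m) \<ge> 0"
            using False thmm by (intro mult_nonneg_nonneg) auto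
          thus ?thesis by (simp add: algebra_simps)
        qed
        finally show ?thesis using rhs by simp
      qed
    qed
  next
    fix \<theta> assume th: "0 \<le> \<theta> \<and> \<theta> < theta_U n S C D"
    have thmm: "\<theta> * (real n - real m) < real m" using th nm_pos unfolding tU
      by (simp add: pos_less_divide_eq)
    have mpos: "m > 0"
    proof (rule ccontr)
      assume "\<not> m > 0" hence "m = 0" by simp
      thus False using th unfolding tU by (simp; linarith)
    qed
    have "U \<noteq> {}" using mpos unfolding m_def by (metis card.empty less_irrefl)
    then obtain j where j: "j \<in> U" by blast
    define gap where "gap = (S - \<beta> * Ds) / Ds"
    have gap_pos: "gap > 0" unfolding gap_def using bD Ds_pos by simp
    define E where "E = insert gap ((\<lambda>i. ?mf i - \<beta>) ` U)"
    define \<epsilon> where "\<epsilon> = Min E"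
    have finE: "finite E" "E \<noteq> {}" unfolding E_def using finU by auto
    have eps_pos: "\<epsilon> > 0" unfolding \<epsilon>_def using finE gap_pos
      by (subst Min_gr_iff) (auto simp: E_def U_def)
    have eps_gap: "\<epsilon> \<le> gap" unfolding \<epsilon>_def using finE by (intro Min_le) (auto simp: E_def)
    have eps_U: "\<epsilon> \<le> ?mf i - \<beta>" if "i \<in> U" for i
      unfolding \<epsilon>_def using finE that by (intro Min_le) (auto simp: E_def)
    define bs where "bs = (\<lambda>i. \<beta> + (if i \<in> U then \<epsilon> else 0))"
    define b where "b = \<beta> + \<epsilon>"
    have feas: "feasible n S C D bs b" unfolding feasible_def
    proof (intro conjI ballI)
      have "(\<Sum>i\<in>?A. bs i * D i) \<le> (\<Sum>i\<in>?A. (\<beta> + \<epsilon>) * D i)"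
        using assms(4) eps_pos unfolding bs_def by (intro sum_mono mult_right_mono) (auto simp: less_imp_le)
      also have "\<dots> = (\<beta> + \<epsilon>) * Ds" unfolding Ds_def by (simp add: sum_distrib_left)
      also have "\<dots> \<le> (\<beta> + gap) * Ds" using eps_gap Ds_pos by simp
      also have "\<dots> = S" unfolding gap_def using Ds_pos by (simp add: field_simps)
      finally show "(\<Sum>i\<in>?A. bs i * D i) \<le> S" .
      show "0 \<le> b" unfolding b_def using bpos eps_pos by simp
      show "b \<le> 1" unfolding b_def using eps_U[OF j] mf_le1[of j] j UA by auto
      fix i assume iA: "i \<in> ?A"
      show "0 \<le> bs i" unfolding bs_def using bpos eps_pos by simp
      show "bs i \<le> b" unfolding bs_def b_def using eps_pos by simp
      show "bs i \<le> ?mf i" unfolding bs_def using eps_U[of i] ble[OF iA] by auto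
    qed
    have s1: "(\<Sum>i\<in>?A. bs i) = real n * \<beta> + real m * \<epsilon>"
    proof -
      have "(\<Sum>i\<in>?A. bs i) = (\<Sum>i\<in>?A. \<beta>) + (\<Sum>i\<in>?A. if i \<in> U then \<epsilon> else 0)"
        unfolding bs_def by (simp add: sum.distrib)
      thus ?thesis using sumIf[of \<epsilon> 0] by simp
    qed
    have s2: "(\<Sum>i\<in>?A. b - bs i) = (real n - real m) * \<epsilon>"
    proof -
      have "(\<Sum>i\<in>?A. b - bs i) = (\<Sum>i\<in>?A. if i \<in> U then 0 else \<epsilon>)"
        unfolding bs_def b_def by (intro sum.cong) auto
      thus ?thesis using sumIf[of 0 \<epsilon>] by simp
    qed
    have "\<theta> * ((real n - real m) * \<epsilon>) < real m * \<epsilon>"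
      using mult_strict_right_mono[OF thmm eps_pos] by (simp add: algebra_simps)
    hence "real n * \<beta> < (\<Sum>i\<in>?A. bs i) - \<theta> * (\<Sum>i\<in>?A. b - bs i)"
      unfolding s1 s2 by simp
    with feas show "\<exists>bs b. feasible n S C D bs b \<and>
               real n * \<beta> < (\<Sum>i\<in>?A. bs i) - \<theta> * (\<Sum>i\<in>?A. b - bs i)" by blast
  qed
qed

end
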